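(* Let $\mathcal{A}$ be a unital commutative C*-algebra with identity $1$, let $d\in\mathbb{N}$, and let $\mathcal{A}^d$ be the standard Hilbert C*-module over $\mathcal{A}$. Let $n\geq d$ and let $\{\tau_j\}_{j=1}^n$ be a collection of vectors in $\mathcal{A}^d$ with $\langle \tau_j,\tau_j\rangle=1$ for all $1\leq j\leq n$. Then, for every $m\in\mathbb{N}$, \[ \sum_{j=1}^n\sum_{k=1}^n\|\langle \tau_j, \tau_k\rangle \|^{2m}\geq \sum_{j=1}^n\sum_{k=1}^n\langle \tau_j, \tau_k\rangle ^{m}\langle \tau_k, \tau_j\rangle ^{m}\geq \frac{n^2}{{d+m-1\choose m}}, \] in particular \[ \sum_{j=1}^n\sum_{k=1}^n\|\langle \tau_j, \tau_k\rangle \|^{2} \geq \sum_{j=1}^n\sum_{k=1}^n\langle \tau_j, \tau_k\rangle \langle \tau_k, \tau_j\rangle \geq \frac{n^2}{d}. \] Further (for $n\geq 2$), for every $m\in\mathbb{N}$, \[ \max _{1\leq j,k \leq n,\, j\neq k}\|\langle \tau_j, \tau_k\rangle \|^{2m}\geq \frac{1}{n-1}\left[\frac{n}{{d+m-1\choose m}}-1\right], \] and in particular \[ \max _{1\leq j,k \leq n,\, j\neq k}\|\langle \tau_j, \tau_k\rangle \|^{2}\geq\frac{n-d}{d(n-1)}. \]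
   Context: The standard Hilbert C*-module $\mathcal{A}^d$ consists of $d$-tuples $(a_1,\dots,a_d)$ of elements of $\mathcal{A}$, with left action $a\cdot(a_1,\dots,a_d)=(aa_1,\dots,aa_d)$ and $\mathcal{A}$-valued inner product $\langle (a_r)_{r=1}^d,(b_r)_{r=1}^d\rangle=\sum_{r=1}^d a_rb_r^*$ (linear in the first variable, conjugate-linear in the second). Inequalities between elements of $\mathcal{A}$ refer to the usual order on self-adjoint elements of the C*-algebra, and a real number $c$ appearing in such an inequality is identified with $c\cdot 1\in\mathcal{A}$; $\|\cdot\|$ is the C*-norm of $\mathcal{A}$. *)

theory Defs
  imports "HOL-Analysis.Analysis"
begin

class comm_cstar_algebra = real_normed_algebra_1 + banach + comm_ring_1 +
  fixes cscale :: "complex \<Rightarrow> 'a \<Rightarrow> 'a"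
    and cstar :: "'a \<Rightarrow> 'a"
  assumes cscale_add_right: "cscale c (x + y) = cscale c x + cscale c y"
    and cscale_add_left: "cscale (c + c') x = cscale c x + cscale c' x"
    and cscale_cscale: "cscale c (cscale c' x) = cscale (c * c') x"
    and cscale_one: "cscale 1 x = x"
    and cscale_of_real: "cscale (complex_of_real r) x = scaleR r x"
    and cscale_mult_left: "cscale c x * y = cscale c (x * y)"
    and cscale_mult_right: "x * cscale c y = cscale c (x * y)"
    and norm_cscale: "norm (cscale c x) = cmod c * norm x"
    and cstar_cstar: "cstar (cstar x) = x"
    and cstar_add: "cstar (x + y) = cstar x + cstar y"
    and cstar_cscale: "cstar (cscale c x) = cscale (cnj c) (cstar x)"
    and cstar_mult: "cstar (x * y) = cstar y * cstar x"
    and cstar_identity: "norm (cstar x * x) = (norm x)\<^sup>2"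

definition cspectrum :: "'a::comm_cstar_algebra \<Rightarrow> complex set" where
  "cspectrum a = {z. \<not> (\<exists>b. b * (a - cscale z 1) = 1 \<and> (a - cscale z 1) * b = 1)}"

definition cpositive :: "'a::comm_cstar_algebra \<Rightarrow> bool" where
  "cpositive a \<longleftrightarrow> cstar a = a \<and> cspectrum a \<subseteq> {z. Im z = 0 \<and> 0 \<le> Re z}"

definition cle :: "'a::comm_cstar_algebra \<Rightarrow> 'a \<Rightarrow> bool" where
  "cle a b \<longleftrightarrow> cstar a = a \<and> cstar b = b \<and> cpositive (b - a)"

text \<open>Standard Hilbert C*-module \<open>A^d\<close>: vectors are functions on \<open>{1..d}\<close>
  (values outside are irrelevant); inner product \<open>\<Sum>r. a_r b_r^*\<close>.\<close>

definition hinner :: "nat \<Rightarrow> (nat \<Rightarrow> 'a::comm_cstar_algebra) \<Rightarrow> (nat \<Rightarrow> 'a) \<Rightarrow> 'a" where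
  "hinner d x y = (\<Sum>r\<in>{1..d}. x r * cstar (y r))"

end

theory Submission
  imports Defs "HOL-Library.Multiset"
begin

lemma cstar_one [simp]: "cstar (1::'a::comm_cstar_algebra) = 1"
proof -
  have "cstar (cstar (1::'a) * 1) = cstar 1 * cstar (cstar 1)" by (rule cstar_mult)
  then show ?thesis by (simp add: cstar_cstar)
qed

lemma cstar_zero [simp]: "cstar (0::'a::comm_cstar_algebra) = 0"
  using cstar_add[of "0::'a" 0] by simp

lemma cstar_minus [simp]: "cstar (- x::'a::comm_cstar_algebra) = - cstar x"
  using cstar_add[of x "-x"] by (simp add: minus_unique)

lemma cstar_diff [simp]: "cstar (x - y::'a::comm_cstar_algebra) = cstar x - cstar y"
  using cstar_add[of x "-y"] by simp

lemma cstar_add' [simp]: "cstar (x + y::'a::comm_cstar_algebra) = cstar x + cstar y"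
  by (rule cstar_add)

lemma cstar_mult' [simp]: "cstar (x * y::'a::comm_cstar_algebra) = cstar x * cstar y"
  by (simp add: cstar_mult mult.commute)

lemma cstar_cstar' [simp]: "cstar (cstar (x::'a::comm_cstar_algebra)) = x"
  by (rule cstar_cstar)

lemma cstar_sum [simp]: "cstar (sum f A :: 'a::comm_cstar_algebra) = (\<Sum>x\<in>A. cstar (f x))"
  by (induction A rule: infinite_finite_induct) auto

lemma cstar_prod [simp]: "cstar (prod f A :: 'a::comm_cstar_algebra) = (\<Prod>x\<in>A. cstar (f x))"
  by (induction A rule: infinite_finite_induct) auto

lemma cstar_power [simp]: "cstar (x ^ n :: 'a::comm_cstar_algebra) = cstar x ^ n"
  by (induction n) auto

lemma cstar_of_real [simp]: "cstar (of_real r :: 'a::comm_cstar_algebra) = of_real r"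
proof -
  have "(of_real r::'a) = cscale (complex_of_real r) 1"
    using cscale_of_real[of r "1::'a"] by (simp add: scaleR_conv_of_real)
  moreover have "cstar (cscale (complex_of_real r) (1::'a)) = cscale (complex_of_real r) 1"
    by (simp add: cstar_cscale)
  ultimately show ?thesis by simp
qed

lemma cstar_of_nat [simp]: "cstar (of_nat k :: 'a::comm_cstar_algebra) = of_nat k"
  using cstar_of_real[of "real k"] by simp

lemma cstar_numeral [simp]: "cstar (numeral k :: 'a::comm_cstar_algebra) = numeral k"
  using cstar_of_nat[of "numeral k"] by simp

lemma norm_cstar [simp]: "norm (cstar (x::'a::comm_cstar_algebra)) = norm x"
proof -
  have le: "norm y \<le> norm (cstar y)" for y :: 'a
  proof (cases "y = 0")
    case True then show ?thesis by simp
  next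
    case False
    have "(norm y)\<^sup>2 = norm (cstar y * y)" by (rule cstar_identity[symmetric])
    also have "\<dots> \<le> norm (cstar y) * norm y" by (rule norm_mult_ineq)
    finally have "norm y * norm y \<le> norm (cstar y) * norm y" by (simp add: power2_eq_square)
    then show ?thesis using False by simp
  qed
  show ?thesis using le[of x] le[of "cstar x"] by simp
qed

definition ci :: "'a::comm_cstar_algebra" where "ci = cscale \<i> 1"

lemma cscale_conv: "cscale z (x::'a::comm_cstar_algebra) = (of_real (Re z) + of_real (Im z) * ci) * x"
proof -
  have z: "z = complex_of_real (Re z) + \<i> * complex_of_real (Im z)"
    by (simp add: complex_eq_iff)
  have "cscale z x = cscale (complex_of_real (Re z)) x + cscale (\<i> * complex_of_real (Im z)) x"
    by (subst z) (simp add: cscale_add_left)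
  also have "cscale (\<i> * complex_of_real (Im z)) x = cscale \<i> (cscale (complex_of_real (Im z)) x)"
    by (simp add: cscale_cscale)
  also have "\<dots> = cscale \<i> (1 * (of_real (Im z) * x))"
    by (simp add: cscale_of_real scaleR_conv_of_real)
  also have "\<dots> = ci * (of_real (Im z) * x)"
    unfolding ci_def by (simp only: cscale_mult_left)
  finally show ?thesis
    by (simp add: cscale_of_real scaleR_conv_of_real algebra_simps)
qed

lemma ci_sq: "ci * ci = (-1::'a::comm_cstar_algebra)"
proof -
  have "ci * ci = cscale \<i> (1 * cscale \<i> (1::'a))" unfolding ci_def by (simp only: cscale_mult_left)
  also have "\<dots> = cscale (-1) 1" by (simp add: cscale_cscale)
  also have "\<dots> = -1" using cscale_of_real[of "-1" "1::'a"] by simp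
  finally show ?thesis .
qed

lemma cstar_ci [simp]: "cstar ci = - (ci::'a::comm_cstar_algebra)"
proof -
  have "cstar (ci::'a) = cscale (- \<i>) 1" unfolding ci_def by (simp add: cstar_cscale)
  also have "\<dots> = - ci" by (simp add: cscale_conv)
  finally show ?thesis .
qed

lemma norm_ci: "norm (ci::'a::comm_cstar_algebra) = 1"
  unfolding ci_def by (simp add: norm_cscale)


definition inv_el :: "'a::comm_cstar_algebra \<Rightarrow> bool" where
  "inv_el x \<longleftrightarrow> (\<exists>b. b * x = 1)"

lemma inv_el_mult: "inv_el x \<Longrightarrow> inv_el y \<Longrightarrow> inv_el (x * y)"
  unfolding inv_el_def by (metis mult.assoc mult.commute mult_1_right)

lemma in_cspectrum: "z \<in> cspectrum a \<longleftrightarrow> \<not> inv_el (a - cscale z 1)"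
  unfolding cspectrum_def inv_el_def by (auto simp: mult.commute)

lemma neumann:
  fixes y :: "'a::comm_cstar_algebra"
  assumes "norm y < 1" shows "inv_el (1 - y)"
proof -
  have sm: "summable (\<lambda>n. y ^ n)" by (rule complete_algebra_summable_geometric[OF assms])
  have "(\<lambda>n. y ^ n - y ^ Suc n) sums (y ^ 0 - 0)"
    by (rule telescope_sums'[OF LIMSEQ_power_zero[OF assms]])
  then have "(\<lambda>n. (1 - y) * y ^ n) sums 1" by (simp add: algebra_simps)
  moreover have "(\<lambda>n. (1 - y) * y ^ n) sums ((1 - y) * suminf (\<lambda>n. y ^ n))"
    by (rule sums_mult[OF summable_sums[OF sm]])
  ultimately have "(1 - y) * suminf (\<lambda>n. y ^ n) = 1" using sums_unique2 by blast
  then show ?thesis unfolding inv_el_def by (metis mult.commute)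
qed

lemma cscale_one_mult: "cscale z (1::'a::comm_cstar_algebra) * cscale w 1 = cscale (z * w) 1"
  by (simp add: cscale_mult_left cscale_cscale)

lemma cspectrum_bound:
  fixes x :: "'a::comm_cstar_algebra"
  assumes "z \<in> cspectrum x" shows "cmod z \<le> norm x"
proof (rule ccontr)
  assume "\<not> ?thesis"
  then have lt: "norm x < cmod z" by simp
  then have z0: "z \<noteq> 0" by auto
  define e where "e = cscale z (1::'a)"
  define e' where "e' = cscale (1/z) (1::'a)"
  have ee: "e' * e = 1" unfolding e_def e'_def using z0 by (simp add: cscale_one_mult cscale_one)
  have "norm (e' * x) \<le> norm e' * norm x" by (rule norm_mult_ineq)
  also have "norm e' = 1 / cmod z" unfolding e'_def by (simp add: norm_cscale norm_divide)
  finally have "norm (e' * x) \<le> norm x / cmod z" by simp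
  also have "\<dots> < 1" using lt z0 by simp
  finally have "inv_el (1 - e' * x)" by (rule neumann)
  moreover have "inv_el (- e)" unfolding inv_el_def using ee by (metis minus_mult_minus)
  ultimately have "inv_el (- e * (1 - e' * x))" using inv_el_mult[of "-e" "1 - e' * x"] by simp
  moreover have "- e * (1 - e' * x) = x - e"
  proof -
    have "- e * (1 - e' * x) = x * (e' * e) - e" by (simp add: algebra_simps)
    then show ?thesis using ee by simp
  qed
  ultimately have "inv_el (x - cscale z 1)" by (simp add: e_def)
  with assms show False by (simp add: in_cspectrum)
qed

lemma cscale_one_ci: "cscale z (1::'a::comm_cstar_algebra) = of_real (Re z) + of_real (Im z) * ci"
  using cscale_conv[of z "1::'a"] by simp

lemma norm_of_real_le: "norm (x + of_real r :: 'a::comm_cstar_algebra) \<le> norm x + \<bar>r\<bar>"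
  using norm_triangle_ineq[of x "of_real r::'a"] by simp

lemma cspectrum_real:
  fixes h :: "'a::comm_cstar_algebra"
  assumes h: "cstar h = h" and z: "z \<in> cspectrum h" shows "Im z = 0"
proof (rule ccontr)
  assume nz: "Im z \<noteq> 0"
  have key: "(Re z)\<^sup>2 + (Im z)\<^sup>2 + 2 * Im z * s \<le> (norm h)\<^sup>2" for s :: real
  proof -
    define k where "k = h + of_real s * ci"
    have "z + complex_of_real s * \<i> \<in> cspectrum k"
      using z unfolding in_cspectrum k_def cscale_one_ci by (simp add: algebra_simps)
    then have "cmod (z + complex_of_real s * \<i>) \<le> norm k" by (rule cspectrum_bound)
    then have "(cmod (z + complex_of_real s * \<i>))\<^sup>2 \<le> (norm k)\<^sup>2"
      by (simp add: power_mono)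
    also have "(norm k)\<^sup>2 = norm (cstar k * k)" by (rule cstar_identity[symmetric])
    also have "cstar k * k = h * h + of_real (s * s)"
    proof -
      have "cstar k = h - of_real s * ci" unfolding k_def using h by simp
      then have "cstar k * k = h * h - of_real s * of_real s * (ci * ci)"
        unfolding k_def by (simp add: algebra_simps)
      then show ?thesis by (simp add: ci_sq)
    qed
    also have "norm (h * h + of_real (s * s)) \<le> norm (h * h) + \<bar>s * s\<bar>" by (rule norm_of_real_le)
    also have "\<dots> \<le> (norm h)\<^sup>2 + s\<^sup>2"
      using norm_mult_ineq[of h h] by (simp add: power2_eq_square)
    finally have "(cmod (z + complex_of_real s * \<i>))\<^sup>2 \<le> (norm h)\<^sup>2 + s\<^sup>2" .
    moreover have "(cmod (z + complex_of_real s * \<i>))\<^sup>2 = (Re z)\<^sup>2 + (Im z + s)\<^sup>2"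
      by (simp add: cmod_power2)
    ultimately show ?thesis by (simp add: power2_eq_square algebra_simps)
  qed
  define s where "s = ((norm h)\<^sup>2 + 1) / (2 * Im z)"
  have "2 * Im z * s = (norm h)\<^sup>2 + 1" unfolding s_def using nz by simp
  with key[of s] show False
    using zero_le_power2[of "Re z"] zero_le_power2[of "Im z"] by linarith
qed

lemma cspectrum_affine:
  fixes h :: "'a::comm_cstar_algebra"
  assumes z: "z \<in> cspectrum h" and e: "\<epsilon> \<noteq> 0"
  shows "cmod (1 - complex_of_real \<epsilon> * z) \<le> norm (1 - of_real \<epsilon> * h)"
proof -
  have "1 - complex_of_real \<epsilon> * z \<in> cspectrum (1 - of_real \<epsilon> * h)"
  proof -
    have eq: "(1 - of_real \<epsilon> * h) - cscale (1 - complex_of_real \<epsilon> * z) 1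
        = of_real (- \<epsilon>) * (h - cscale z (1::'a))"
      by (simp add: cscale_one_ci algebra_simps)
    show ?thesis
    proof (rule ccontr)
      assume "\<not> ?thesis"
      then have "inv_el (of_real (- \<epsilon>) * (h - cscale z (1::'a)))"
        unfolding in_cspectrum eq by simp
      then obtain b where "b * (of_real (- \<epsilon>) * (h - cscale z (1::'a))) = 1"
        unfolding inv_el_def by blast
      then have "inv_el (h - cscale z 1)" unfolding inv_el_def
        by (metis mult.assoc mult.commute)
      with z show False by (simp add: in_cspectrum)
    qed
  qed
  then show ?thesis by (rule cspectrum_bound)
qed


definition good :: "'a::comm_cstar_algebra \<Rightarrow> bool" where
  "good h \<longleftrightarrow> cstar h = h \<and> (\<exists>K \<epsilon>0. \<epsilon>0 > 0 \<and>
      (\<forall>\<epsilon>. 0 < \<epsilon> \<and> \<epsilon> \<le> \<epsilon>0 \<longrightarrow> norm (1 - of_real \<epsilon> * h) \<le> 1 + \<epsilon>\<^sup>2 * K))"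

lemma norm_ofr: "norm (of_real r * x :: 'a::real_normed_algebra_1) = \<bar>r\<bar> * norm x"
  by (metis norm_scaleR scaleR_conv_of_real)

lemma good_cpositive:
  fixes h :: "'a::comm_cstar_algebra"
  assumes "good h" shows "cpositive h"
proof -
  from assms obtain K \<epsilon>0 where h: "cstar h = h" and e0: "\<epsilon>0 > 0"
    and b: "\<And>\<epsilon>. 0 < \<epsilon> \<Longrightarrow> \<epsilon> \<le> \<epsilon>0 \<Longrightarrow> norm (1 - of_real \<epsilon> * h) \<le> 1 + \<epsilon>\<^sup>2 * K"
    unfolding good_def by blast
  have "Im z = 0 \<and> 0 \<le> Re z" if z: "z \<in> cspectrum h" for z
  proof
    show im: "Im z = 0" by (rule cspectrum_real[OF h z])
    show "0 \<le> Re z"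
    proof (rule ccontr)
      assume "\<not> 0 \<le> Re z"
      then have x: "Re z < 0" by simp
      define \<epsilon> where "\<epsilon> = min \<epsilon>0 (- Re z / (2 * (\<bar>K\<bar> + 1)))"
      have "0 < - Re z / (2 * (\<bar>K\<bar> + 1))" using x by (intro divide_pos_pos) auto
      then have ep: "0 < \<epsilon>" unfolding \<epsilon>_def using e0 by simp
      have ep2: "\<epsilon> \<le> - Re z / (2 * (\<bar>K\<bar> + 1))" unfolding \<epsilon>_def by simp
      have zz: "z = complex_of_real (Re z)" using im by (simp add: complex_eq_iff)
      have "cmod (1 - complex_of_real \<epsilon> * z) \<le> norm (1 - of_real \<epsilon> * h)"
        by (rule cspectrum_affine[OF z]) (use ep in simp)
      also have "\<dots> \<le> 1 + \<epsilon>\<^sup>2 * K" using b[OF ep] \<epsilon>_def by simp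
      finally have "cmod (1 - complex_of_real \<epsilon> * z) \<le> 1 + \<epsilon>\<^sup>2 * K" .
      moreover have "cmod (1 - complex_of_real \<epsilon> * z) = 1 - \<epsilon> * Re z"
      proof -
        have eq: "1 - complex_of_real \<epsilon> * z = complex_of_real (1 - \<epsilon> * Re z)"
          by (subst zz) simp
        have "0 \<le> 1 - \<epsilon> * Re z" using mult_pos_neg[OF ep x] by linarith
        then show ?thesis unfolding eq norm_of_real by simp
      qed
      ultimately have "- \<epsilon> * Re z \<le> \<epsilon> * (\<epsilon> * K)" by (simp add: power2_eq_square)
      then have "\<epsilon> * (- Re z) \<le> \<epsilon> * (\<epsilon> * K)" by simp
      then have "- Re z \<le> \<epsilon> * K" using ep mult_le_cancel_left_pos by blast
      also have "\<epsilon> * K \<le> \<epsilon> * \<bar>K\<bar>" using ep by (simp add: mult_left_mono)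
      also have "\<dots> \<le> (- Re z / (2 * (\<bar>K\<bar> + 1))) * \<bar>K\<bar>" by (rule mult_right_mono[OF ep2]) simp
      also have "\<dots> < - Re z"
      proof -
        have "(- Re z / (2 * (\<bar>K\<bar> + 1))) * \<bar>K\<bar> = - Re z * (\<bar>K\<bar> / (2 * (\<bar>K\<bar> + 1)))" by simp
        also have "\<dots> < - Re z * 1"
          using x by (intro mult_strict_left_mono) (auto simp: field_simps)
        finally show ?thesis by simp
      qed
      finally show False by simp
    qed
  qed
  then show ?thesis unfolding cpositive_def using h by auto
qed

lemma good_zero: "good (0::'a::comm_cstar_algebra)"
  unfolding good_def by (auto intro!: exI[of _ 0] exI[of _ 1])

lemma good_add:
  fixes h1 h2 :: "'a::comm_cstar_algebra"
  assumes "good h1" "good h2" shows "good (h1 + h2)"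
proof -
  from assms(1) obtain K1 e1 where h1: "cstar h1 = h1" and e1: "e1 > 0"
    and b1: "\<And>\<epsilon>. 0 < \<epsilon> \<Longrightarrow> \<epsilon> \<le> e1 \<Longrightarrow> norm (1 - of_real \<epsilon> * h1) \<le> 1 + \<epsilon>\<^sup>2 * K1"
    unfolding good_def by blast
  from assms(2) obtain K2 e2 where h2: "cstar h2 = h2" and e2: "e2 > 0"
    and b2: "\<And>\<epsilon>. 0 < \<epsilon> \<Longrightarrow> \<epsilon> \<le> e2 \<Longrightarrow> norm (1 - of_real \<epsilon> * h2) \<le> 1 + \<epsilon>\<^sup>2 * K2"
    unfolding good_def by blast
  have A: "norm (1 - of_real \<epsilon> * (h1 + h2)) \<le> 1 + \<epsilon>\<^sup>2 * (2 * K1 + 2 * K2)"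
    if ep: "0 < \<epsilon>" "\<epsilon> \<le> min e1 e2 / 2" for \<epsilon>
  proof -
    have "1 - of_real \<epsilon> * (h1 + h2) = of_real (1/2) * (1 - of_real (2 * \<epsilon>) * h1)
        + of_real (1/2) * (1 - of_real (2 * \<epsilon>) * h2)"
      by (simp add: algebra_simps flip: of_real_mult of_real_add)
    also have "norm \<dots> \<le> norm (of_real (1/2) * (1 - of_real (2 * \<epsilon>) * h1 :: 'a))
        + norm (of_real (1/2) * (1 - of_real (2 * \<epsilon>) * h2 :: 'a))"
      by (rule norm_triangle_ineq)
    also have "\<dots> = (1/2) * norm (1 - of_real (2 * \<epsilon>) * h1) + (1/2) * norm (1 - of_real (2 * \<epsilon>) * h2)"
      by (simp only: norm_ofr)
    also have "\<dots> \<le> (1/2) * (1 + (2 * \<epsilon>)\<^sup>2 * K1) + (1/2) * (1 + (2 * \<epsilon>)\<^sup>2 * K2)"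
    proof -
      have n1: "norm (1 - of_real (2 * \<epsilon>) * h1) \<le> 1 + (2 * \<epsilon>)\<^sup>2 * K1"
        by (rule b1) (use ep in auto)
      have n2: "norm (1 - of_real (2 * \<epsilon>) * h2) \<le> 1 + (2 * \<epsilon>)\<^sup>2 * K2"
        by (rule b2) (use ep in auto)
      show ?thesis using n1 n2 by (intro add_mono mult_left_mono) auto
    qed
    also have "\<dots> = 1 + \<epsilon>\<^sup>2 * (2 * K1 + 2 * K2)" by (simp add: power2_eq_square algebra_simps)
    finally show ?thesis .
  qed
  have B: "min e1 e2 / 2 > 0" using e1 e2 by simp
  have C: "cstar (h1 + h2) = h1 + h2" using h1 h2 by simp
  show ?thesis unfolding good_def
    by (intro conjI C exI[of _ "2 * K1 + 2 * K2"] exI[of _ "min e1 e2 / 2"] allI impI) (use A B in auto)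
qed

lemma good_sum:
  fixes f :: "'b \<Rightarrow> 'a::comm_cstar_algebra"
  assumes "\<And>x. x \<in> A \<Longrightarrow> good (f x)" shows "good (sum f A)"
  using assms by (induction A rule: infinite_finite_induct) (auto intro: good_add good_zero)

lemma good_bound:
  fixes S :: "'a::comm_cstar_algebra"
  assumes S: "cstar S = S" and n: "norm S \<le> s" shows "good (of_real s - S)"
proof -
  have s0: "0 \<le> s" using n norm_ge_zero order_trans by blast
  have A: "norm (1 - of_real \<epsilon> * (of_real s - S)) \<le> 1 + \<epsilon>\<^sup>2 * 0"
    if ep: "0 < \<epsilon>" "\<epsilon> \<le> 1 / (s + 1)" for \<epsilon>
  proof -
    have es: "\<epsilon> * s \<le> 1"
    proof -
      have "\<epsilon> * (s + 1) \<le> 1" using ep s0 by (simp add: field_simps)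
      then show ?thesis using ep by (simp add: algebra_simps)
    qed
    have "1 - of_real \<epsilon> * (of_real s - S) = of_real (1 - \<epsilon> * s) + of_real \<epsilon> * (S::'a)"
      by (simp add: algebra_simps)
    also have "norm \<dots> \<le> norm (of_real (1 - \<epsilon> * s) :: 'a) + norm (of_real \<epsilon> * S)"
      by (rule norm_triangle_ineq)
    also have "\<dots> \<le> (1 - \<epsilon> * s) + \<epsilon> * s"
    proof -
      have "norm (of_real (1 - \<epsilon> * s) :: 'a) = 1 - \<epsilon> * s"
        using es by (simp only: norm_of_real)
      moreover have "norm (of_real \<epsilon> * S) \<le> \<epsilon> * s"
        using ep n by (simp add: norm_ofr mult_left_mono)
      ultimately show ?thesis by linarith
    qed
    finally show ?thesis by simp
  qed
  have B: "1 / (s + 1) > 0" using s0 by simp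
  have C: "cstar (of_real s - S) = of_real s - S" using S by simp
  show ?thesis unfolding good_def
    by (intro conjI C exI[of _ 0] exI[of _ "1 / (s + 1)"] allI impI) (use A B in auto)
qed

lemma good_of_real: "0 \<le> c \<Longrightarrow> good (of_real c :: 'a::comm_cstar_algebra)"
  using good_bound[of "0::'a" c] by simp


lemma inv_el_shift:
  fixes a :: "'a::comm_cstar_algebra"
  assumes a: "cstar a = a" and t: "t \<noteq> 0"
  shows "inv_el (1 - of_real t * a * ci)"
proof -
  define z where "z = Complex 0 (- 1 / t)"
  have "Im z \<noteq> 0" using t unfolding z_def by simp
  then have "z \<notin> cspectrum a" using cspectrum_real[OF a] by blast
  then have i1: "inv_el (a - cscale z 1)" by (simp add: in_cspectrum)
  have cz: "a - cscale z 1 = a + of_real (1 / t) * ci"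
    unfolding z_def cscale_one_ci by simp
  have i2: "inv_el (- of_real t * ci :: 'a)"
  proof -
    have "(of_real (1/t) * ci) * (- of_real t * ci) = - (of_real (1/t) * of_real t) * (ci * ci :: 'a)"
      by (simp add: algebra_simps)
    also have "\<dots> = 1" using t by (simp add: ci_sq flip: of_real_mult)
    finally show ?thesis unfolding inv_el_def by blast
  qed
  have "(- of_real t * ci) * (a + of_real (1 / t) * ci) = - (of_real t * a * ci) - of_real t * of_real (1/t) * (ci * ci :: 'a)"
    by (simp add: algebra_simps)
  also have "\<dots> = 1 - of_real t * a * ci" using t by (simp add: ci_sq flip: of_real_mult)
  finally show ?thesis using inv_el_mult[OF i2 i1] cz by simp
qed

lemma sq_bound:
  fixes a :: "'a::comm_cstar_algebra"
  assumes a: "cstar a = a" and t: "t > 0"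
  shows "norm (1 - of_real (2 * t * t) * (a * a)) \<le> 1 + 2 * t ^ 4 * norm a ^ 4"
proof -
  define w where "w = 1 - of_real t * a * ci"
  have "inv_el w" unfolding w_def using inv_el_shift[OF a] t by simp
  then obtain w' where ww: "w' * w = 1" unfolding inv_el_def by blast
  have ws: "cstar w = 2 - w" unfolding w_def using a by simp
  have ww2: "cstar w' * cstar w = 1" using arg_cong[OF ww, of cstar] by simp
  define v where "v = cstar w * w'"
  have "cstar v * v = (w' * w) * (cstar w' * cstar w)" unfolding v_def by (simp add: ac_simps)
  then have "cstar v * v = 1" using ww ww2 by simp
  then have "(norm v)\<^sup>2 = 1" using cstar_identity[of v] by simp
  then have nv: "norm v = 1" using norm_ge_zero[of v] by (simp add: power2_eq_1_iff)
  have v2: "v = 2 * w' - 1" unfolding v_def ws using ww by (simp add: algebra_simps)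
  define e where "e = w' + cstar w' - 1"
  have "2 * e = v + cstar v" unfolding e_def v2 by simp
  then have "norm (2 * e) \<le> 2" using norm_triangle_ineq[of v "cstar v"] nv by simp
  moreover have "norm (2 * e) = 2 * norm e" using norm_ofr[of 2 e] by simp
  ultimately have ne: "norm e \<le> 1" by simp
  define q where "q = w' * cstar w'"
  define g where "g = w * cstar w"
  define T :: 'a where "T = of_real (t * t) * (a * a)"
  have qg: "q * g = 1" unfolding q_def g_def
    using ww ww2 by (metis mult.assoc mult.left_commute mult_1_right)
  have gT: "g = 1 + T"
  proof -
    have "g = 1 - of_real t * of_real t * (a * a) * (ci * ci)"
      unfolding g_def w_def using a by (simp add: algebra_simps)
    then show ?thesis unfolding T_def by (simp add: ci_sq)
  qed
  have eg: "e * g = (2 * q - 1) * g"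
  proof -
    have "e * g = (w' * w) * cstar w + (cstar w' * cstar w) * w - g"
      unfolding e_def g_def by (simp add: algebra_simps)
    also have "\<dots> = 2 - g" using ww ww2 ws by simp
    also have "\<dots> = (2 * q - 1) * g"
    proof -
      have "(2 * q - 1) * g = 2 * (q * g) - g" by (simp add: algebra_simps)
      then show ?thesis using qg by simp
    qed
    finally show ?thesis .
  qed
  have e2: "e = 2 * q - 1"
  proof -
    have "e = e * (g * q)" using qg by (simp add: mult.commute)
    also have "\<dots> = (2 * q - 1) * (g * q)" by (metis eg mult.assoc)
    finally show ?thesis using qg by (simp add: mult.commute)
  qed
  have nq: "norm q \<le> 1"
  proof -
    have "2 * q = e + 1" using e2 by simp
    then have "norm (2 * q) \<le> 2" using norm_triangle_ineq[of e 1] ne by simp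
    moreover have "norm (2 * q) = 2 * norm q" using norm_ofr[of 2 q] by simp
    ultimately show ?thesis by simp
  qed
  have iden: "1 - of_real (2 * t * t) * (a * a) = e - 2 * (T * T) * q"
  proof -
    have "e - 2 * (T * T) * q - (1 - 2 * T) = 2 * (q * g - 1) * (1 - T)"
      unfolding e2 gT by (simp add: algebra_simps)
    then have "e - 2 * (T * T) * q = 1 - 2 * T" using qg by simp
    moreover have "of_real (2 * t * t) * (a * a) = 2 * T" unfolding T_def by simp
    ultimately show ?thesis by simp
  qed
  have nT: "norm T \<le> t * t * (norm a)\<^sup>2"
  proof -
    have "norm T = \<bar>t * t\<bar> * norm (a * a)" unfolding T_def by (rule norm_ofr)
    then have "norm T = t * t * norm (a * a)" by simp
    also have "\<dots> \<le> t * t * (norm a * norm a)"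
      by (intro mult_left_mono norm_mult_ineq) simp
    finally show ?thesis by (simp add: power2_eq_square)
  qed
  have "norm (1 - of_real (2 * t * t) * (a * a)) \<le> norm e + norm (2 * (T * T) * q)"
    unfolding iden by (rule norm_triangle_ineq4)
  also have "norm (2 * (T * T) * q) \<le> 2 * (norm T * norm T) * norm q"
  proof -
    have "norm (2 * (T * T) * q) \<le> norm (2 * (T * T)) * norm q" by (rule norm_mult_ineq)
    also have "norm (2 * (T * T)) = 2 * norm (T * T)" using norm_ofr[of 2 "T * T"] by simp
    also have "norm (T * T) \<le> norm T * norm T" by (rule norm_mult_ineq)
    finally show ?thesis by (simp add: mult_right_mono)
  qed
  also have "2 * (norm T * norm T) * norm q \<le> 2 * (norm T * norm T) * 1"
    using nq by (intro mult_left_mono) auto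
  also have "norm T * norm T \<le> (t * t * (norm a)\<^sup>2) * (t * t * (norm a)\<^sup>2)"
    using nT by (intro mult_mono) auto
  finally show ?thesis using ne by (simp add: power2_eq_square power4_eq_xxxx algebra_simps)
qed

lemma good_sq:
  fixes a :: "'a::comm_cstar_algebra"
  assumes a: "cstar a = a" shows "good (a * a)"
proof -
  have A: "norm (1 - of_real \<epsilon> * (a * a)) \<le> 1 + \<epsilon>\<^sup>2 * norm a ^ 4" if ep: "0 < \<epsilon>" for \<epsilon>
  proof -
    define t where "t = sqrt (\<epsilon> / 2)"
    have t0: "t > 0" unfolding t_def using ep by simp
    have tt: "t * t = \<epsilon> / 2" unfolding t_def using ep by simp
    have e1: "2 * t * t = \<epsilon>" using tt by simp
    have e2: "2 * t ^ 4 = \<epsilon>\<^sup>2 / 2"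
    proof -
      have e: "\<epsilon> = 2 * (t * t)" using tt by simp
      show ?thesis unfolding e by (simp add: power4_eq_xxxx power2_eq_square)
    qed
    have "norm (1 - of_real \<epsilon> * (a * a)) \<le> 1 + \<epsilon>\<^sup>2 / 2 * norm a ^ 4"
      using sq_bound[OF a t0] unfolding e1 e2 .
    also have "\<dots> \<le> 1 + \<epsilon>\<^sup>2 * norm a ^ 4" by simp
    finally show ?thesis .
  qed
  have C: "cstar (a * a) = a * a" using a by simp
  show ?thesis unfolding good_def
    by (intro conjI C exI[of _ "norm a ^ 4"] exI[of _ 1] allI impI) (use A in auto)
qed

lemma good_yy:
  fixes y :: "'a::comm_cstar_algebra"
  shows "good (y * cstar y)"
proof -
  define p where "p = of_real (1/2) * (y + cstar y)"
  define r where "r = of_real (1/2) * ci * (cstar y - y)"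
  have p: "cstar p = p" unfolding p_def by (simp add: algebra_simps)
  have r: "cstar r = r" unfolding r_def by (simp add: algebra_simps)
  have "p * p + r * r = of_real (1/2) * of_real (1/2) * ((y + cstar y) * (y + cstar y) + (ci * ci) * ((cstar y - y) * (cstar y - y)))"
    unfolding p_def r_def by (simp add: algebra_simps)
  also have "\<dots> = of_real (1/2 * (1/2)) * (4 * (y * cstar y))"
    by (simp add: ci_sq algebra_simps flip: of_real_mult)
  also have "\<dots> = y * cstar y"
    by (simp add: of_real_def)
  finally have "y * cstar y = p * p + r * r" by simp
  then show ?thesis using good_add[OF good_sq[OF p] good_sq[OF r]] by simp
qed


definition vv :: "(nat \<Rightarrow> nat \<Rightarrow> 'a::comm_cstar_algebra) \<Rightarrow> nat \<Rightarrow> nat \<Rightarrow> (nat \<Rightarrow> nat) \<Rightarrow> 'a" where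
  "vv \<tau> m j g = (\<Prod>i<m. \<tau> j (g i))"

definition MM :: "(nat \<Rightarrow> nat \<Rightarrow> 'a::comm_cstar_algebra) \<Rightarrow> nat \<Rightarrow> nat \<Rightarrow> (nat \<Rightarrow> nat) \<Rightarrow> (nat \<Rightarrow> nat) \<Rightarrow> 'a" where
  "MM \<tau> m n g g' = (\<Sum>j\<in>{1..n}. vv \<tau> m j g * cstar (vv \<tau> m j g'))"

definition GG :: "nat \<Rightarrow> nat \<Rightarrow> (nat \<Rightarrow> nat) set" where
  "GG d m = PiE {..<m} (\<lambda>_. {1..d})"

definition kap :: "nat \<Rightarrow> (nat \<Rightarrow> nat) \<Rightarrow> nat multiset" where
  "kap m g = image_mset g (mset_set {..<m})"

lemma finite_GG [simp]: "finite (GG d m)"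
  unfolding GG_def by (simp add: finite_PiE)

lemma GG_nonempty: "1 \<le> d \<Longrightarrow> GG d m \<noteq> {}"
  unfolding GG_def by (simp add: PiE_eq_empty_iff)

lemma hinner_power:
  fixes \<tau> :: "nat \<Rightarrow> nat \<Rightarrow> 'a::comm_cstar_algebra"
  shows "hinner d (\<tau> j) (\<tau> k) ^ m = (\<Sum>g\<in>GG d m. vv \<tau> m j g * cstar (vv \<tau> m k g))"
proof -
  have "hinner d (\<tau> j) (\<tau> k) ^ m = (\<Prod>i\<in>{..<m}. \<Sum>r\<in>{1..d}. \<tau> j r * cstar (\<tau> k r))"
    unfolding hinner_def by simp
  also have "\<dots> = (\<Sum>g\<in>GG d m. \<Prod>i\<in>{..<m}. \<tau> j (g i) * cstar (\<tau> k (g i)))"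
    unfolding GG_def by (rule prod_sum_PiE) auto
  also have "\<dots> = (\<Sum>g\<in>GG d m. vv \<tau> m j g * cstar (vv \<tau> m k g))"
    unfolding vv_def by (simp add: prod.distrib)
  finally show ?thesis .
qed

lemma cstar_hinner:
  fixes \<tau> :: "nat \<Rightarrow> nat \<Rightarrow> 'a::comm_cstar_algebra"
  shows "cstar (hinner d (\<tau> j) (\<tau> k)) = hinner d (\<tau> k) (\<tau> j)"
  unfolding hinner_def by (simp add: mult.commute)

lemma cstar_MM: "cstar (MM \<tau> m n g g') = MM \<tau> m n g' g"
  unfolding MM_def by (simp add: mult.commute)

lemma S_eq:
  fixes \<tau> :: "nat \<Rightarrow> nat \<Rightarrow> 'a::comm_cstar_algebra"
  shows "(\<Sum>j\<in>{1..n}. \<Sum>k\<in>{1..n}. hinner d (\<tau> j) (\<tau> k) ^ m * hinner d (\<tau> k) (\<tau> j) ^ m)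
    = (\<Sum>g\<in>GG d m. \<Sum>g'\<in>GG d m. MM \<tau> m n g g' * MM \<tau> m n g' g)"
proof -
  define X where "X = (\<lambda>j k g g'. (vv \<tau> m j g * cstar (vv \<tau> m k g)) * (vv \<tau> m k g' * cstar (vv \<tau> m j g')))"
  have "(\<Sum>j\<in>{1..n}. \<Sum>k\<in>{1..n}. hinner d (\<tau> j) (\<tau> k) ^ m * hinner d (\<tau> k) (\<tau> j) ^ m)
      = (\<Sum>j\<in>{1..n}. \<Sum>k\<in>{1..n}. \<Sum>g\<in>GG d m. \<Sum>g'\<in>GG d m. X j k g g')"
    unfolding hinner_power X_def by (simp add: sum_product)
  also have "\<dots> = (\<Sum>j\<in>{1..n}. \<Sum>g\<in>GG d m. \<Sum>k\<in>{1..n}. \<Sum>g'\<in>GG d m. X j k g g')"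
    by (rule sum.cong[OF refl], rule sum.swap)
  also have "\<dots> = (\<Sum>j\<in>{1..n}. \<Sum>g\<in>GG d m. \<Sum>g'\<in>GG d m. \<Sum>k\<in>{1..n}. X j k g g')"
    by (rule sum.cong[OF refl], rule sum.cong[OF refl], rule sum.swap)
  also have "\<dots> = (\<Sum>g\<in>GG d m. \<Sum>j\<in>{1..n}. \<Sum>g'\<in>GG d m. \<Sum>k\<in>{1..n}. X j k g g')"
    by (rule sum.swap)
  also have "\<dots> = (\<Sum>g\<in>GG d m. \<Sum>g'\<in>GG d m. \<Sum>j\<in>{1..n}. \<Sum>k\<in>{1..n}. X j k g g')"
    by (rule sum.cong[OF refl], rule sum.swap)
  also have "\<dots> = (\<Sum>g\<in>GG d m. \<Sum>g'\<in>GG d m. MM \<tau> m n g g' * MM \<tau> m n g' g)"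
    unfolding MM_def X_def by (simp add: sum_product ac_simps)
  finally show ?thesis .
qed

lemma vv_kap:
  fixes \<tau> :: "nat \<Rightarrow> nat \<Rightarrow> 'a::comm_cstar_algebra"
  shows "vv \<tau> m j g = prod_mset (image_mset (\<tau> j) (kap m g))"
  unfolding vv_def kap_def by (simp add: prod_unfold_prod_mset multiset.map_comp comp_def)

lemma MM_kap:
  assumes "kap m g = kap m g'"
  shows "MM \<tau> m n g g' = MM \<tau> m n g g" "MM \<tau> m n g' g = MM \<tau> m n g' g'"
  unfolding MM_def using assms by (simp_all add: vv_kap)

lemma card_kap:
  assumes "1 \<le> d"
  shows "card (kap m ` GG d m) \<le> (d + m - 1) choose m" "1 \<le> card (kap m ` GG d m)"
proof -
  have sub: "kap m ` GG d m \<subseteq> multisets_of_size {1..d} m"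
    unfolding multisets_of_size_def kap_def GG_def by (auto simp: PiE_def Pi_def)
  have "card (kap m ` GG d m) \<le> card (multisets_of_size {1..d} m)"
    by (rule card_mono[OF _ sub]) auto
  also have "\<dots> = (d + m - 1) choose m" by (simp add: card_multisets_of_size)
  finally show "card (kap m ` GG d m) \<le> (d + m - 1) choose m" .
  show "1 \<le> card (kap m ` GG d m)"
    using GG_nonempty[OF assms, of m] by (simp add: Suc_le_eq card_gt_0_iff)
qed


lemma welch_good:
  fixes \<tau> :: "nat \<Rightarrow> nat \<Rightarrow> 'a::comm_cstar_algebra"
  assumes d: "1 \<le> d" and unit: "\<And>j. j \<in> {1..n} \<Longrightarrow> hinner d (\<tau> j) (\<tau> j) = 1"
  shows "good ((\<Sum>j\<in>{1..n}. \<Sum>k\<in>{1..n}. hinner d (\<tau> j) (\<tau> k) ^ m * hinner d (\<tau> k) (\<tau> j) ^ m)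
           - of_real (real n ^ 2 / real ((d + m - 1) choose m)))"
proof -
  define G where "G = GG d m"
  define M where "M = MM \<tau> m n"
  define D where "D = (\<lambda>g. M g g)"
  define C where "C = kap m ` G"
  define \<nu> where "\<nu> = (\<lambda>c. \<Sum>g\<in>{g. g \<in> G \<and> kap m g = c}. D g)"
  define K where "K = card C"
  define N where "N = (d + m - 1) choose m"
  define x where "x = real n / real K"
  have fG: "finite G" unfolding G_def by simp
  have fC: "finite C" unfolding C_def using fG by simp
  have KN: "K \<le> N" "1 \<le> K" unfolding K_def N_def C_def G_def using card_kap[OF d] by auto
  define S where "S = (\<Sum>j\<in>{1..n}. \<Sum>k\<in>{1..n}. hinner d (\<tau> j) (\<tau> k) ^ m * hinner d (\<tau> k) (\<tau> j) ^ m)"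
  define T where "T = (\<Sum>g\<in>G. \<Sum>g'\<in>G. if kap m g = kap m g' then D g * D g' else 0)"
  define Q where "Q = (\<Sum>g\<in>G. \<Sum>g'\<in>G. if kap m g = kap m g' then 0 else M g g' * cstar (M g g'))"
  have ST: "S = T + Q"
  proof -
    have "S = (\<Sum>g\<in>G. \<Sum>g'\<in>G. M g g' * M g' g)"
      unfolding S_def G_def M_def by (rule S_eq)
    also have "\<dots> = (\<Sum>g\<in>G. \<Sum>g'\<in>G. (if kap m g = kap m g' then D g * D g' else 0)
        + (if kap m g = kap m g' then 0 else M g g' * cstar (M g g')))"
    proof (intro sum.cong refl)
      fix g g'
      show "M g g' * M g' g = (if kap m g = kap m g' then D g * D g' else 0)
        + (if kap m g = kap m g' then 0 else M g g' * cstar (M g g'))"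
      proof (cases "kap m g = kap m g'")
        case True then show ?thesis using MM_kap[OF True, of \<tau> n] by (simp add: D_def M_def)
      next
        case False then show ?thesis by (simp add: M_def cstar_MM)
      qed
    qed
    also have "\<dots> = T + Q" unfolding T_def Q_def by (simp add: sum.distrib)
    finally show ?thesis .
  qed
  have T2: "T = (\<Sum>c\<in>C. \<nu> c * \<nu> c)"
  proof -
    have inner: "(\<Sum>g'\<in>G. if kap m g = kap m g' then D g * D g' else 0) = D g * \<nu> (kap m g)" for g
    proof -
      have "\<nu> (kap m g) = (\<Sum>g'\<in>G. if kap m g' = kap m g then D g' else 0)"
        unfolding \<nu>_def using sum.inter_filter[OF fG, of D "\<lambda>g'. kap m g' = kap m g"]
        by simp
      then show ?thesis by (simp add: sum_distrib_left eq_commute[of "kap m g"] if_distrib cong: if_cong)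
    qed
    have "T = (\<Sum>g\<in>G. D g * \<nu> (kap m g))" unfolding T_def inner ..
    also have "\<dots> = (\<Sum>c\<in>C. \<Sum>g\<in>{g. g \<in> G \<and> kap m g = c}. D g * \<nu> (kap m g))"
      unfolding C_def by (rule sum.image_gen[OF fG])
    also have "\<dots> = (\<Sum>c\<in>C. \<nu> c * \<nu> c)"
      unfolding \<nu>_def by (intro sum.cong refl) (auto simp: sum_distrib_right)
    finally show ?thesis .
  qed
  have sn: "(\<Sum>c\<in>C. \<nu> c) = of_nat n"
  proof -
    have "(\<Sum>c\<in>C. \<nu> c) = (\<Sum>g\<in>G. D g)"
      unfolding \<nu>_def C_def by (rule sum.image_gen[OF fG, symmetric])
    also have "\<dots> = (\<Sum>j\<in>{1..n}. \<Sum>g\<in>G. vv \<tau> m j g * cstar (vv \<tau> m j g))"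
      unfolding D_def M_def MM_def by (rule sum.swap)
    also have "\<dots> = (\<Sum>j\<in>{1..n}. hinner d (\<tau> j) (\<tau> j) ^ m)"
      unfolding G_def hinner_power ..
    also have "\<dots> = (\<Sum>j\<in>{1..n}. 1)" using unit by simp
    finally show ?thesis by simp
  qed
  have sa: "cstar (\<nu> c) = \<nu> c" for c
    unfolding \<nu>_def D_def M_def by (simp add: cstar_MM)
  have sq: "(\<Sum>c\<in>C. (\<nu> c - of_real x) * (\<nu> c - of_real x))
      = T - of_real (2 * x * real n) + of_real (real K * x * x)"
  proof -
    have "(\<Sum>c\<in>C. (\<nu> c - of_real x) * (\<nu> c - of_real x))
        = (\<Sum>c\<in>C. \<nu> c * \<nu> c - of_real (2 * x) * \<nu> c + of_real (x * x))"
      by (intro sum.cong refl) (simp add: algebra_simps)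
    also have "\<dots> = (\<Sum>c\<in>C. \<nu> c * \<nu> c) - of_real (2 * x) * (\<Sum>c\<in>C. \<nu> c) + of_nat K * of_real (x * x)"
      unfolding K_def by (simp add: sum.distrib sum_subtractf sum_distrib_left)
    finally show ?thesis unfolding T2 sn by simp
  qed
  have real_id: "- (2 * x * real n) + real K * x * x + (real n ^ 2 / real K - real n ^ 2 / real N)
      = - (real n ^ 2 / real N)"
    unfolding x_def using KN by (simp add: field_simps power2_eq_square)
  have decomp: "S - of_real (real n ^ 2 / real N)
      = Q + (\<Sum>c\<in>C. (\<nu> c - of_real x) * (\<nu> c - of_real x)) + of_real (real n ^ 2 / real K - real n ^ 2 / real N)"
  proof -
    have "Q + (\<Sum>c\<in>C. (\<nu> c - of_real x) * (\<nu> c - of_real x)) + of_real (real n ^ 2 / real K - real n ^ 2 / real N)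
        = S + of_real (- (2 * x * real n) + real K * x * x + (real n ^ 2 / real K - real n ^ 2 / real N))"
      unfolding sq ST by (simp add: algebra_simps)
    also have "\<dots> = S - of_real (real n ^ 2 / real N)" unfolding real_id by simp
    finally show ?thesis by simp
  qed
  have g1: "good Q" unfolding Q_def
    by (intro good_sum) (auto intro: good_zero good_yy)
  have g2: "good (\<Sum>c\<in>C. (\<nu> c - of_real x) * (\<nu> c - of_real x))"
    by (intro good_sum good_sq) (simp add: sa)
  have g3: "good (of_real (real n ^ 2 / real K - real n ^ 2 / real N) :: 'a)"
  proof (rule good_of_real)
    have "real n ^ 2 / real N \<le> real n ^ 2 / real K"
      using KN by (intro divide_left_mono) auto
    then show "0 \<le> real n ^ 2 / real K - real n ^ 2 / real N" by simp
  qed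
  have "good (Q + (\<Sum>c\<in>C. (\<nu> c - of_real x) * (\<nu> c - of_real x)) + of_real (real n ^ 2 / real K - real n ^ 2 / real N))"
    by (rule good_add[OF good_add[OF g1 g2] g3])
  then have "good (S - of_real (real n ^ 2 / real N))" by (simp only: decomp)
  then show ?thesis unfolding S_def N_def .
qed

lemma norm_bound_good:
  fixes \<tau> :: "nat \<Rightarrow> nat \<Rightarrow> 'a::comm_cstar_algebra"
  shows "good (of_real (\<Sum>j\<in>{1..n}. \<Sum>k\<in>{1..n}. norm (hinner d (\<tau> j) (\<tau> k)) ^ (2 * m))
           - (\<Sum>j\<in>{1..n}. \<Sum>k\<in>{1..n}. hinner d (\<tau> j) (\<tau> k) ^ m * hinner d (\<tau> k) (\<tau> j) ^ m))"
    and "cstar (\<Sum>j\<in>{1..n}. \<Sum>k\<in>{1..n}. hinner d (\<tau> j) (\<tau> k) ^ m * hinner d (\<tau> k) (\<tau> j) ^ m)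
       = (\<Sum>j\<in>{1..n}. \<Sum>k\<in>{1..n}. hinner d (\<tau> j) (\<tau> k) ^ m * hinner d (\<tau> k) (\<tau> j) ^ m)"
proof -
  let ?A = "\<lambda>j k. hinner d (\<tau> j) (\<tau> k)"
  show sa: "cstar (\<Sum>j\<in>{1..n}. \<Sum>k\<in>{1..n}. ?A j k ^ m * ?A k j ^ m)
       = (\<Sum>j\<in>{1..n}. \<Sum>k\<in>{1..n}. ?A j k ^ m * ?A k j ^ m)"
    by (simp add: cstar_hinner mult.commute)
  have "norm (\<Sum>j\<in>{1..n}. \<Sum>k\<in>{1..n}. ?A j k ^ m * ?A k j ^ m)
      \<le> (\<Sum>j\<in>{1..n}. norm (\<Sum>k\<in>{1..n}. ?A j k ^ m * ?A k j ^ m))" by (rule norm_sum)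
  also have "\<dots> \<le> (\<Sum>j\<in>{1..n}. \<Sum>k\<in>{1..n}. norm (?A j k ^ m * ?A k j ^ m))"
    by (intro sum_mono norm_sum)
  also have "\<dots> \<le> (\<Sum>j\<in>{1..n}. \<Sum>k\<in>{1..n}. norm (?A j k) ^ (2 * m))"
  proof (intro sum_mono)
    fix j k
    have "norm (?A k j) = norm (?A j k)" using norm_cstar[of "?A j k"] by (simp add: cstar_hinner)
    have "norm (?A j k ^ m * ?A k j ^ m) \<le> norm (?A j k ^ m) * norm (?A k j ^ m)"
      by (rule norm_mult_ineq)
    also have "\<dots> \<le> norm (?A j k) ^ m * norm (?A k j) ^ m"
      by (intro mult_mono norm_power_ineq) auto
    finally have "norm (?A j k ^ m * ?A k j ^ m) \<le> norm (?A j k) ^ m * norm (?A j k) ^ m"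
      using \<open>norm (?A k j) = norm (?A j k)\<close> by simp
    then show "norm (?A j k ^ m * ?A k j ^ m) \<le> norm (?A j k) ^ (2 * m)"
      by (simp add: power_add[symmetric] mult_2)
  qed
  finally show "good (of_real (\<Sum>j\<in>{1..n}. \<Sum>k\<in>{1..n}. norm (?A j k) ^ (2 * m))
           - (\<Sum>j\<in>{1..n}. \<Sum>k\<in>{1..n}. ?A j k ^ m * ?A k j ^ m))"
    by (rule good_bound[OF sa])
qed


lemma cpositive_of_real_nonneg:
  assumes "cpositive (of_real c :: 'a::comm_cstar_algebra)" shows "0 \<le> c"
proof -
  have "\<not> inv_el (0::'a)" unfolding inv_el_def by simp
  then have "complex_of_real c \<in> cspectrum (of_real c :: 'a)"
    unfolding in_cspectrum cscale_one_ci by simp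
  then show ?thesis using assms unfolding cpositive_def by auto
qed

lemma good_real_le:
  fixes S :: "'a::comm_cstar_algebra"
  assumes "good (of_real s - S)" "good (S - of_real t)" shows "t \<le> s"
proof -
  have "good ((of_real s - S) + (S - of_real t) :: 'a)" by (rule good_add[OF assms])
  then have "good (of_real (s - t) :: 'a)" by simp
  then have "0 \<le> s - t" using good_cpositive cpositive_of_real_nonneg by blast
  then show ?thesis by simp
qed

lemma max_bound:
  fixes f :: "nat \<Rightarrow> nat \<Rightarrow> real"
  assumes n: "2 \<le> n" and diag: "\<And>j. j \<in> {1..n} \<Longrightarrow> f j j = 1"
    and L: "L \<le> (\<Sum>j\<in>{1..n}. \<Sum>k\<in>{1..n}. f j k)"
  shows "(L - real n) / (real n * (real n - 1)) \<le> Max {f j k | j k. j \<in> {1..n} \<and> k \<in> {1..n} \<and> j \<noteq> k}"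
proof -
  define P where "P = {f j k | j k. j \<in> {1..n} \<and> k \<in> {1..n} \<and> j \<noteq> k}"
  define Mx where "Mx = Max P"
  have P: "P = (\<lambda>(j, k). f j k) ` {(j, k). j \<in> {1..n} \<and> k \<in> {1..n} \<and> j \<noteq> k}"
    unfolding P_def by auto
  have fin: "finite P" unfolding P
    by (rule finite_imageI, rule finite_subset[of _ "{1..n} \<times> {1..n}"]) auto
  have le: "f j k \<le> Mx" if "j \<in> {1..n}" "k \<in> {1..n}" "j \<noteq> k" for j k
    unfolding Mx_def using fin that by (intro Max_ge) (auto simp: P_def)
  have row: "(\<Sum>k\<in>{1..n}. f j k) \<le> 1 + (real n - 1) * Mx" if j: "j \<in> {1..n}" for j
  proof -
    have "(\<Sum>k\<in>{1..n}. f j k) = f j j + (\<Sum>k\<in>{1..n} - {j}. f j k)"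
      using j by (simp add: sum.remove)
    also have "(\<Sum>k\<in>{1..n} - {j}. f j k) \<le> (\<Sum>k\<in>{1..n} - {j}. Mx)"
      using j by (intro sum_mono le) auto
    also have "\<dots> = (real n - 1) * Mx" using j by (simp add: of_nat_diff)
    finally show ?thesis using diag[OF j] by simp
  qed
  have "L \<le> (\<Sum>j\<in>{1..n}. 1 + (real n - 1) * Mx)"
    using L sum_mono[of "{1..n}" "\<lambda>j. \<Sum>k\<in>{1..n}. f j k", OF row] by linarith
  also have "\<dots> = real n + real n * (real n - 1) * Mx" by (simp add: algebra_simps)
  finally have "L - real n \<le> (real n * (real n - 1)) * Mx" by simp
  moreover have "0 < real n * (real n - 1)" using n by simp
  ultimately show ?thesis unfolding Mx_def P_def by (simp add: divide_le_eq mult.commute)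
qed

theorem theorem2p2:
  fixes \<tau> :: "nat \<Rightarrow> nat \<Rightarrow> 'a::comm_cstar_algebra"
    and d n m :: nat
  assumes "1 \<le> d" and "d \<le> n"
    and "\<And>j. j \<in> {1..n} \<Longrightarrow> hinner d (\<tau> j) (\<tau> j) = 1"
    and "1 \<le> m"
  shows "cle (\<Sum>j\<in>{1..n}. \<Sum>k\<in>{1..n}. hinner d (\<tau> j) (\<tau> k) ^ m * hinner d (\<tau> k) (\<tau> j) ^ m)
             (of_real (\<Sum>j\<in>{1..n}. \<Sum>k\<in>{1..n}. norm (hinner d (\<tau> j) (\<tau> k)) ^ (2 * m)))
       \<and> cle (of_real (real n ^ 2 / real ((d + m - 1) choose m)))
             (\<Sum>j\<in>{1..n}. \<Sum>k\<in>{1..n}. hinner d (\<tau> j) (\<tau> k) ^ m * hinner d (\<tau> k) (\<tau> j) ^ m)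
       \<and> cle (\<Sum>j\<in>{1..n}. \<Sum>k\<in>{1..n}. hinner d (\<tau> j) (\<tau> k) * hinner d (\<tau> k) (\<tau> j))
             (of_real (\<Sum>j\<in>{1..n}. \<Sum>k\<in>{1..n}. norm (hinner d (\<tau> j) (\<tau> k)) ^ 2))
       \<and> cle (of_real (real n ^ 2 / real d))
             (\<Sum>j\<in>{1..n}. \<Sum>k\<in>{1..n}. hinner d (\<tau> j) (\<tau> k) * hinner d (\<tau> k) (\<tau> j))
       \<and> (2 \<le> n \<longrightarrow>
            Max {norm (hinner d (\<tau> j) (\<tau> k)) ^ (2 * m) | j k. j \<in> {1..n} \<and> k \<in> {1..n} \<and> j \<noteq> k}
              \<ge> 1 / (real n - 1) * (real n / real ((d + m - 1) choose m) - 1)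
          \<and> Max {norm (hinner d (\<tau> j) (\<tau> k)) ^ 2 | j k. j \<in> {1..n} \<and> k \<in> {1..n} \<and> j \<noteq> k}
              \<ge> (real n - real d) / (real d * (real n - 1)))"
proof -
  note d = assms(1) and unit = assms(3)
  let ?A = "\<lambda>j k. hinner d (\<tau> j) (\<tau> k)"
  define S where "S = (\<lambda>p. \<Sum>j\<in>{1..n}. \<Sum>k\<in>{1..n}. ?A j k ^ p * ?A k j ^ p)"
  define s where "s = (\<lambda>p. \<Sum>j\<in>{1..n}. \<Sum>k\<in>{1..n}. norm (?A j k) ^ (2 * p))"
  define N where "N = (\<lambda>p. (d + p - 1) choose p)"
  have g1: "good (of_real (s p) - S p)" for p
    unfolding s_def S_def by (rule norm_bound_good(1))
  have sa: "cstar (S p) = S p" for p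
    unfolding S_def by (rule norm_bound_good(2))
  have g2: "good (S p - of_real (real n ^ 2 / real (N p)))" for p
    unfolding S_def N_def by (rule welch_good[OF d unit])
  have cle1: "cle (S p) (of_real (s p))" for p
    unfolding cle_def using sa g1 good_cpositive by auto
  have cle2: "cle (of_real (real n ^ 2 / real (N p))) (S p)" for p
    unfolding cle_def using sa g2 good_cpositive by auto
  have rl: "real n ^ 2 / real (N p) \<le> s p" for p
    by (rule good_real_le[OF g1 g2])
  have S1: "S 1 = (\<Sum>j\<in>{1..n}. \<Sum>k\<in>{1..n}. ?A j k * ?A k j)" unfolding S_def by simp
  have s1: "s 1 = (\<Sum>j\<in>{1..n}. \<Sum>k\<in>{1..n}. norm (?A j k) ^ 2)" unfolding s_def by simp
  have N1: "N 1 = d" unfolding N_def using d by simp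
  have Npos: "0 < N p" for p unfolding N_def using d by simp
  have maxp: "(real n ^ 2 / real (N p) - real n) / (real n * (real n - 1))
      \<le> Max {norm (?A j k) ^ (2 * p) | j k. j \<in> {1..n} \<and> k \<in> {1..n} \<and> j \<noteq> k}"
    if n2: "2 \<le> n" for p
  proof -
    have "(real n ^ 2 / real (N p) - real n) / (real n * (real n - 1))
      \<le> Max {(\<lambda>j k. norm (?A j k) ^ (2 * p)) j k | j k. j \<in> {1..n} \<and> k \<in> {1..n} \<and> j \<noteq> k}"
      by (rule max_bound[OF n2]) (use unit rl[of p, unfolded s_def] in auto)
    then show ?thesis by simp
  qed
  have eqp: "(real n ^ 2 / real (N p) - real n) / (real n * (real n - 1))
      = 1 / (real n - 1) * (real n / real (N p) - 1)" if n2: "2 \<le> n" for p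
    using n2 Npos[of p] by (simp add: field_simps power2_eq_square)
  have eq1: "(real n ^ 2 / real d - real n) / (real n * (real n - 1))
      = (real n - real d) / (real d * (real n - 1))" if n2: "2 \<le> n"
    using n2 d by (simp add: field_simps power2_eq_square)
  have c1: "cle (\<Sum>j\<in>{1..n}. \<Sum>k\<in>{1..n}. ?A j k ^ m * ?A k j ^ m)
             (of_real (\<Sum>j\<in>{1..n}. \<Sum>k\<in>{1..n}. norm (?A j k) ^ (2 * m)))"
    using cle1[of m] unfolding S_def s_def .
  have c2: "cle (of_real (real n ^ 2 / real ((d + m - 1) choose m)))
             (\<Sum>j\<in>{1..n}. \<Sum>k\<in>{1..n}. ?A j k ^ m * ?A k j ^ m)"
    using cle2[of m] unfolding N_def S_def .
  have c3: "cle (\<Sum>j\<in>{1..n}. \<Sum>k\<in>{1..n}. ?A j k * ?A k j)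
             (of_real (\<Sum>j\<in>{1..n}. \<Sum>k\<in>{1..n}. norm (?A j k) ^ 2))"
    using cle1[of 1] unfolding S1 s1 .
  have c4: "cle (of_real (real n ^ 2 / real d)) (\<Sum>j\<in>{1..n}. \<Sum>k\<in>{1..n}. ?A j k * ?A k j)"
    using cle2[of 1] unfolding S1 N1 .
  have c5: "Max {norm (?A j k) ^ (2 * m) | j k. j \<in> {1..n} \<and> k \<in> {1..n} \<and> j \<noteq> k}
              \<ge> 1 / (real n - 1) * (real n / real ((d + m - 1) choose m) - 1)" if n2: "2 \<le> n"
    using maxp[OF n2, of m] eqp[OF n2, of m] unfolding N_def by simp
  have c6: "Max {norm (?A j k) ^ 2 | j k. j \<in> {1..n} \<and> k \<in> {1..n} \<and> j \<noteq> k}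
              \<ge> (real n - real d) / (real d * (real n - 1))" if n2: "2 \<le> n"
    using maxp[OF n2, of 1] eq1[OF n2] unfolding N1 by simp
  show ?thesis using c1 c2 c3 c4 c5 c6 by blast
qed

end
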